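(* Let $d,w \ge 1$ be integers and let $h_1,\dots,h_d$ be fixed functions from the item universe $\mathcal{U}$ to $\{1,\dots,w\}$. Let $\sigma_1$ and $\sigma_2$ be two finite streams of occurrences of items of $\mathcal{U}$, each occurrence carrying a positive real (decayed) weight, and let $\sigma=\sigma_1\sigma_2$ be their concatenation. For a stream $\tau$ and a cell $(i,j)$ with $1\le i\le d$, $1\le j\le w$, let $\tau^{(i,j)}$ be the sub-stream of occurrences of items $e$ with $h_i(e)=j$, let $f_{\tau^{(i,j)}}(e)$ be the sum of the weights of the occurrences of $e$ in $\tau^{(i,j)}$, and let $|\tau^{(i,j)}|=\sum_e f_{\tau^{(i,j)}}(e)$ be its total decayed count. Call a two-counter summary $\mathcal{S}=(\Sigma,\hat f_{\mathcal{S}})$ (a set $\Sigma$ of at most $2$ monitored items with estimates $\hat f_{\mathcal{S}}(e)>0$, $e\in\Sigma$; let $\hat f^{min}_{\mathcal{S}}=\min_{e\in\Sigma}\hat f_{\mathcal{S}}(e)$ if $|\Sigma|=2$ and $\hat f^{min}_{\mathcal{S}}=0$ if $|\Sigma|<2$; let $|\mathcal{S}|=\sum_{e\in\Sigma}\hat f_{\mathcal{S}}(e)$) \emph{valid} for a weighted stream $\tau$ with decayed frequencies $f_\tau$ if: (i) $|\mathcal{S}|=|\tau|$; (ii) $\hat f_{\mathcal{S}}(e)-\hat f^{min}_{\mathcal{S}}\le f_\tau(e)\le \hat f_{\mathcal{S}}(e)$ for every $e\in\Sigma$; (iii) $f_\tau(e)\le \hat f^{min}_{\mathcal{S}}$ for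 every item $e\notin\Sigma$; (iv) $\hat f^{min}_{\mathcal{S}}\le |\tau|/2$. Suppose $D_1$ and $D_2$ are $d\times w$ sketches such that, for every cell $(i,j)$, $D_1[i][j]=\mathcal{S}_1=(\Sigma_1,\hat f_{\mathcal{S}_1})$ is a two-counter summary valid for $\sigma_1^{(i,j)}$ and $D_2[i][j]=\mathcal{S}_2=(\Sigma_2,\hat f_{\mathcal{S}_2})$ is a two-counter summary valid for $\sigma_2^{(i,j)}$. Define the merged sketch $G$ cell by cell as follows: form the combined summary $\mathcal{S}_C$ on $\Sigma_C=\Sigma_1\cup\Sigma_2$ by $\hat f_{\mathcal{S}_C}(e)=\hat f_{\mathcal{S}_1}(e)+\hat f_{\mathcal{S}_2}(e)$ for $e\in\Sigma_1\cap\Sigma_2$, $\hat f_{\mathcal{S}_C}(e)=\hat f_{\mathcal{S}_1}(e)+\hat f^{min}_{\mathcal{S}_2}$ for $e\in\Sigma_1\setminus\Sigma_2$, $\hat f_{\mathcal{S}_C}(e)=\hat f_{\mathcal{S}_2}(e)+\hat f^{min}_{\mathcal{S}_1}$ for $e\in\Sigma_2\setminus\Sigma_1$; then, if $|\Sigma_C|>2$, let $G[i][j]=\mathcal{S}_M$ retain only the $2$ items of $\Sigma_C$ with the greatest values of $\hat f_{\mathcal{S}_C}$ (with those values), and otherwise let $G[i][j]=\mathcal{S}_M=\mathcal{S}_C$. Then for every cell $(i,j)$, the merged summary $G[i][j]$ is a two-counter summary valid for $\sigma^{(i,j)}$; in particular the sum of its counters equals the total decayed count $|\sigma^{(i,j)}|=|\sigma_1^{(i,j)}|+|\sigma_2^{(i,j)}|$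 of the items of $\sigma$ mapped to that cell.
   Context: This is the merge operation of PFDCMSS, a parallel algorithm for time-faded heavy hitters. Each stream occurrence of an item $v$ with timestamp $t_v$ carries a (non-normalized forward) decayed weight $g(t_v-L)$ for a positive monotone non-decreasing function $g$ and landmark time $L$; only positivity of the weights matters here. An FDCMSS sketch is a $d\times w$ array, each cell of which holds a Space Saving summary with exactly two counters (a counter with value $0$ monitors no item), maintaining the items mapped to that cell by the row hash function $h_i$. Property (i) ("1-norm equivalence") says the counters in a cell sum to the same value a Count--Min sketch counter for that cell would hold. *)

theory Defs
  imports Complex_Main
begin

type_synonym 'a stream = "('a \<times> real) list"

type_synonym 'a summary = "'a set \<times> ('a \<Rightarrow> real)"

definition pos_weights :: "'a stream \<Rightarrow> bool" where
  "pos_weights \<tau> \<longleftrightarrow> (\<forall>occ \<in> set \<tau>. snd occ > 0)"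

definition cell_stream :: "(nat \<Rightarrow> 'a \<Rightarrow> nat) \<Rightarrow> 'a stream \<Rightarrow> nat \<Rightarrow> nat \<Rightarrow> 'a stream" where
  "cell_stream h \<tau> i j = filter (\<lambda>occ. h i (fst occ) = j) \<tau>"

definition freq :: "'a stream \<Rightarrow> 'a \<Rightarrow> real" where
  "freq \<tau> e = sum_list (map snd (filter (\<lambda>occ. fst occ = e) \<tau>))"

definition total :: "'a stream \<Rightarrow> real" where
  "total \<tau> = sum_list (map snd \<tau>)"

definition two_counter :: "'a summary \<Rightarrow> bool" where
  "two_counter S \<longleftrightarrow> finite (fst S) \<and> card (fst S) \<le> 2 \<and> (\<forall>e \<in> fst S. snd S e > 0)"

definition fmin :: "'a summary \<Rightarrow> real" where
  "fmin S = (if card (fst S) = 2 then Min (snd S ` fst S) else 0)"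

definition snorm :: "'a summary \<Rightarrow> real" where
  "snorm S = (\<Sum>e \<in> fst S. snd S e)"

definition valid :: "'a summary \<Rightarrow> 'a stream \<Rightarrow> bool" where
  "valid S \<tau> \<longleftrightarrow>
     snorm S = total \<tau> \<and>
     (\<forall>e \<in> fst S. snd S e - fmin S \<le> freq \<tau> e \<and> freq \<tau> e \<le> snd S e) \<and>
     (\<forall>e. e \<notin> fst S \<longrightarrow> freq \<tau> e \<le> fmin S) \<and>
     fmin S \<le> total \<tau> / 2"

definition combine :: "'a summary \<Rightarrow> 'a summary \<Rightarrow> 'a summary" where
  "combine S1 S2 = (fst S1 \<union> fst S2,
     (\<lambda>e. if e \<in> fst S1 \<and> e \<in> fst S2 then snd S1 e + snd S2 e
          else if e \<in> fst S1 then snd S1 e + fmin S2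
          else if e \<in> fst S2 then snd S2 e + fmin S1
          else 0))"

text \<open>Estimates outside the monitored set
  are irrelevant and not constrained.\<close>
definition is_merge :: "'a summary \<Rightarrow> 'a summary \<Rightarrow> 'a summary \<Rightarrow> bool" where
  "is_merge S1 S2 SM \<longleftrightarrow>
    (let SC = combine S1 S2 in
     if card (fst SC) > 2 then
       fst SM \<subseteq> fst SC \<and> card (fst SM) = 2 \<and>
       (\<forall>x \<in> fst SM. \<forall>y \<in> fst SC - fst SM. snd SC y \<le> snd SC x) \<and>
       (\<forall>e \<in> fst SM. snd SM e = snd SC e)
     else
       fst SM = fst SC \<and> (\<forall>e \<in> fst SM. snd SM e = snd SC e))"

end

theory Submission
  imports Defs
begin

lemma freq_append: "freq (t1 @ t2) e = freq t1 e + freq t2 e"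
  by (simp add: freq_def)
lemma total_append: "total (t1 @ t2) = total t1 + total t2"
  by (simp add: total_def)
lemma freq_nonneg: "pos_weights t \<Longrightarrow> freq t e \<ge> 0"
  unfolding freq_def pos_weights_def
  by (rule sum_list_nonneg) auto
lemma total_nonneg: "pos_weights t \<Longrightarrow> total t \<ge> 0"
  unfolding total_def pos_weights_def
  by (rule sum_list_nonneg) auto

lemma fmin_props:
  assumes "two_counter (A, f)"
  shows "fmin (A,f) \<ge> 0" "\<And>e. e \<in> A \<Longrightarrow> fmin (A,f) \<le> f e"
    "card A = 2 \<Longrightarrow> \<exists>x\<in>A. f x = fmin (A,f)"
    "card A \<noteq> 2 \<Longrightarrow> fmin (A,f) = 0"
proof -
  have fin: "finite A" and pos: "\<And>e. e \<in> A \<Longrightarrow> f e > 0" using assms by (auto simp: two_counter_def)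
  show "card A \<noteq> 2 \<Longrightarrow> fmin (A,f) = 0" by (simp add: fmin_def)
  show "fmin (A,f) \<ge> 0"
  proof (cases "card A = 2")
    case True
    then have "A \<noteq> {}" by auto
    then have "Min (f ` A) \<in> f ` A" using fin by (intro Min_in) auto
    then show ?thesis using True pos by (fastforce simp: fmin_def intro: less_imp_le)
  qed (simp add: fmin_def)
  show "fmin (A,f) \<le> f e" if "e \<in> A" for e
  proof (cases "card A = 2")
    case True
    then show ?thesis using fin that by (auto simp: fmin_def)
  next
    case False
    then show ?thesis using pos that by (auto simp: fmin_def intro: less_imp_le)
  qed
  show "\<exists>x\<in>A. f x = fmin (A,f)" if "card A = 2"
  proof -
    have "A \<noteq> {}" using that by auto
    then have "Min (f ` A) \<in> f ` A" using fin by (intro Min_in) auto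
    then show ?thesis using that by (auto simp: fmin_def)
  qed
qed


lemma cell:
  assumes tc1: "two_counter (A,f1)" and v1: "valid (A,f1) t1" and p1: "pos_weights t1"
    and tc2: "two_counter (B,f2)" and v2: "valid (B,f2) t2" and p2: "pos_weights t2"
    and mg: "is_merge (A,f1) (B,f2) (M,g)"
  shows "two_counter (M,g) \<and> valid (M,g) (t1 @ t2)"
proof -
  define m1 where "m1 = fmin (A,f1)"
  define m2 where "m2 = fmin (B,f2)"
  define m where "m = m1 + m2"
  define fc where "fc = snd (combine (A,f1) (B,f2))"
  define C where "C = A \<union> B"
  have Ceq: "combine (A,f1) (B,f2) = (C, fc)" by (simp add: combine_def fc_def C_def)
  have finA: "finite A" and cA: "card A \<le> 2" and posA: "\<And>e. e \<in> A \<Longrightarrow> f1 e > 0"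
    using tc1 by (auto simp: two_counter_def)
  have finB: "finite B" and cB: "card B \<le> 2" and posB: "\<And>e. e \<in> B \<Longrightarrow> f2 e > 0"
    using tc2 by (auto simp: two_counter_def)
  have finC: "finite C" using finA finB by (simp add: C_def)
  note fm1 = fmin_props[OF tc1, folded m1_def]
  note fm2 = fmin_props[OF tc2, folded m2_def]
  have sn1: "snorm (A,f1) = total t1" and up1: "\<And>e. e \<in> A \<Longrightarrow> freq t1 e \<le> f1 e"
    and lo1: "\<And>e. e \<in> A \<Longrightarrow> f1 e - m1 \<le> freq t1 e"
    and out1: "\<And>e. e \<notin> A \<Longrightarrow> freq t1 e \<le> m1"
    using v1 by (auto simp: valid_def m1_def)
  have sn2: "snorm (B,f2) = total t2" and up2: "\<And>e. e \<in> B \<Longrightarrow> freq t2 e \<le> f2 e"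
    and lo2: "\<And>e. e \<in> B \<Longrightarrow> f2 e - m2 \<le> freq t2 e"
    and out2: "\<And>e. e \<notin> B \<Longrightarrow> freq t2 e \<le> m2"
    using v2 by (auto simp: valid_def m2_def)
  have fcAB: "\<And>e. e \<in> A \<Longrightarrow> e \<in> B \<Longrightarrow> fc e = f1 e + f2 e"
    and fcA: "\<And>e. e \<in> A \<Longrightarrow> e \<notin> B \<Longrightarrow> fc e = f1 e + m2"
    and fcB: "\<And>e. e \<notin> A \<Longrightarrow> e \<in> B \<Longrightarrow> fc e = f2 e + m1"
    by (simp_all add: fc_def combine_def m1_def m2_def)
  have nn1: "\<And>e. freq t1 e \<ge> 0" using p1 by (rule freq_nonneg)
  have nn2: "\<And>e. freq t2 e \<ge> 0" using p2 by (rule freq_nonneg)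
  have P1: "m \<le> fc e \<and> 0 < fc e \<and> freq (t1@t2) e \<le> fc e \<and> fc e - m \<le> freq (t1@t2) e"
    if eC: "e \<in> C" for e
  proof -
    consider "e \<in> A" "e \<in> B" | "e \<in> A" "e \<notin> B" | "e \<notin> A" "e \<in> B" using eC C_def by auto
    then show ?thesis
    proof cases
      case 1
      then show ?thesis using fcAB[OF 1] fm1(2)[OF 1(1)] fm2(2)[OF 1(2)] posA[of e] posB[of e]
          up1[of e] up2[of e] lo1[of e] lo2[of e] by (simp add: freq_append m_def add_pos_pos)
    next
      case 2
      then show ?thesis using fcA[OF 2] fm1(2)[OF 2(1)] fm2(1) posA[of e]
          up1[of e] out2[OF 2(2)] lo1[of e] nn2[of e] by (simp add: freq_append m_def add_pos_nonneg)
    next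
      case 3
      then show ?thesis using fcB[OF 3] fm2(2)[OF 3(2)] fm1(1) posB[of e]
          up2[of e] out1[OF 3(1)] lo2[of e] nn1[of e] by (simp add: freq_append m_def add_pos_nonneg)
    qed
  qed
  have P2: "freq (t1@t2) e \<le> m" if "e \<notin> C" for e
    using out1[of e] out2[of e] that by (simp add: C_def freq_append m_def)
  have P3: "snorm (C,fc) = total t1 + total t2 + card (A-B) * m2 + card (B-A) * m1"
  proof -
    have u: "C = (A \<inter> B) \<union> (A - B) \<union> (B - A)" by (auto simp: C_def)
    have "snorm (C,fc) = sum fc (A \<inter> B) + sum fc (A - B) + sum fc (B - A)"
      unfolding snorm_def fst_conv snd_conv u using finA finB
      by (subst sum.union_disjoint; auto)+
    also have "sum fc (A \<inter> B) = sum f1 (A \<inter> B) + sum f2 (A \<inter> B)"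
      by (simp add: sum.distrib[symmetric] fcAB)
    also have "sum fc (A - B) = sum f1 (A - B) + card (A-B) * m2"
      by (simp add: sum.distrib fcA)
    also have "sum fc (B - A) = sum f2 (B - A) + card (B-A) * m1"
      by (simp add: sum.distrib fcB)
    finally have "snorm (C,fc) = (sum f1 (A \<inter> B) + sum f1 (A - B)) + (sum f2 (A \<inter> B) + sum f2 (B - A))
        + card (A-B) * m2 + card (B-A) * m1" by simp
    moreover have "sum f1 (A \<inter> B) + sum f1 (A - B) = total t1"
      using sn1 finA unfolding snorm_def fst_conv snd_conv
      by (metis sum.Int_Diff)
    moreover have "sum f2 (A \<inter> B) + sum f2 (B - A) = total t2"
      using sn2 finB unfolding snorm_def fst_conv snd_conv
      by (metis sum.Int_Diff Int_commute)
    ultimately show ?thesis by simp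
  qed
  have mg': "if card C > 2 then M \<subseteq> C \<and> card M = 2 \<and> (\<forall>x\<in>M. \<forall>y\<in>C-M. fc y \<le> fc x) \<and> (\<forall>e\<in>M. g e = fc e) else M = C \<and> (\<forall>e\<in>M. g e = fc e)"
    using mg unfolding is_merge_def Ceq Let_def fst_conv snd_conv .
  have ge: "\<And>e. e \<in> M \<Longrightarrow> g e = fc e" and MC: "M \<subseteq> C" using mg' by (auto split: if_splits)
  have finM: "finite M" using MC finC finite_subset by blast
  have snM: "snorm (M,g) = sum fc M" unfolding snorm_def fst_conv snd_conv
    by (rule sum.cong) (simp_all add: ge)
  have fminM: "card M = 2 \<Longrightarrow> fmin (M,g) = Min (fc ` M)"
  proof -
    assume "card M = 2"
    then have "fmin (M,g) = Min (g ` M)" by (simp add: fmin_def)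
    also have "g ` M = fc ` M" using ge by (auto simp: image_def)
    finally show ?thesis .
  qed
  have mle: "m \<le> fmin (M,g)" if c2: "card M = 2"
  proof -
    have "M \<noteq> {}" using c2 by auto
    then show ?thesis using fminM[OF c2] finM P1 MC by auto
  qed
  have K: "card M \<le> 2 \<and> (card M = 2 \<or> m = 0) \<and> (\<forall>e\<in>C-M. fc e \<le> fmin (M,g)) \<and> snorm (M,g) = total t1 + total t2"
  proof (cases "card C > 2")
    case False
    note nC = this
    then have MC': "M = C" using mg' by simp
    have e0: "card (A-B) * m2 = 0"
    proof (cases "m2 = 0")
      case False
      then have cB2: "card B = 2" using fm2(4) by blast
      have "A - B = {}"
      proof (rule ccontr)
        assume "A - B \<noteq> {}" then obtain x where x: "x\<in>A" "x\<notin>B" by auto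
        then have "insert x B \<subseteq> C" by (auto simp: C_def)
        then have "card (insert x B) \<le> card C" using finC card_mono by blast
        then show False using cB2 x finB nC by simp
      qed
      then show ?thesis by (metis card.empty mult_zero_left of_nat_0)
    qed simp
    have e0': "card (B-A) * m1 = 0"
    proof (cases "m1 = 0")
      case False
      then have cA2: "card A = 2" using fm1(4) by blast
      have "B - A = {}"
      proof (rule ccontr)
        assume "B - A \<noteq> {}" then obtain x where x: "x\<in>B" "x\<notin>A" by auto
        then have "insert x A \<subseteq> C" by (auto simp: C_def)
        then have "card (insert x A) \<le> card C" using finC card_mono by blast
        then show False using cA2 x finA nC by simp
      qed
      then show ?thesis by (metis card.empty mult_zero_left of_nat_0)
    qed simp
    have m0: "card M = 2 \<or> m = 0"
    proof (cases "card M = 2")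
      case False
      then have "card C \<le> 1" using nC MC' by simp
      moreover have "A \<subseteq> C" "B \<subseteq> C" by (auto simp: C_def)
      then have "card A \<le> card C" "card B \<le> card C" by (auto intro: card_mono[OF finC])
      ultimately have "card A \<noteq> 2" "card B \<noteq> 2" by auto
      then show ?thesis using fm1(4) fm2(4) by (simp add: m_def)
    qed simp
    show ?thesis using m0 snM MC' P3 e0 e0' nC by (simp add: snorm_def)
  next
    case True
    note pC = this
    have cM2: "card M = 2" and dom: "\<And>x y. x\<in>M \<Longrightarrow> y\<in>C-M \<Longrightarrow> fc y \<le> fc x"
      using mg' pC by auto
    have K2: "\<forall>e\<in>C-M. fc e \<le> fmin (M,g)"
    proof
      fix e assume e: "e \<in> C - M"
      have "M \<noteq> {}" using cM2 by auto
      then show "fc e \<le> fmin (M,g)" using fminM[OF cM2] finM dom[OF _ e] by auto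
    qed
    have cD: "card (C - M) = card C - 2" using card_Diff_subset[OF finM MC] cM2 by simp
    have cu: "card A + card B = card C + card (A \<inter> B)" using card_Un_Int[OF finA finB] by (simp add: C_def)
    have d1: "card (A - B) = card A - card (A \<inter> B)" using finA by (intro card_Diff_subset_Int) simp
    have d2: "card (B - A) = card B - card (A \<inter> B)" using finB
      by (metis card_Diff_subset_Int finite_Int Int_commute)
    have Z: "\<exists>Z\<subseteq>C. card Z = card (C-M) \<and> (\<forall>z\<in>Z. fc z = m) \<and> card (A-B)*m2 + card (B-A)*m1 = card (C-M) * m"
    proof -
      have "card C = 3 \<or> card C = 4" using pC cu cA cB by linarith
      then show ?thesis
      proof
        assume c4: "card C = 4"
        then have ca: "card A = 2" "card B = 2" "card (A \<inter> B) = 0" using cu cA cB by linarith+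
        then have dis: "A \<inter> B = {}" using finA by simp
        obtain x1 where x1: "x1 \<in> A" "f1 x1 = m1" using fm1(3)[OF ca(1)] by auto
        obtain y1 where y1: "y1 \<in> B" "f2 y1 = m2" using fm2(3)[OF ca(2)] by auto
        have x1B: "x1 \<notin> B" "y1 \<notin> A" using dis x1 y1 by auto
        have fx: "fc x1 = m" "fc y1 = m" using fcA[OF x1(1) x1B(1)] fcB[OF x1B(2) y1(1)] x1 y1 by (simp_all add: m_def)
        have ne: "x1 \<noteq> y1" using x1B x1 by auto
        show ?thesis
        proof (intro exI[of _ "{x1,y1}"] conjI)
          show "{x1,y1} \<subseteq> C" using x1 y1 by (auto simp: C_def)
          show "card {x1,y1} = card (C-M)" using ne cD c4 by simp
          show "\<forall>z\<in>{x1,y1}. fc z = m" using fx by auto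
          show "card (A-B)*m2 + card (B-A)*m1 = card (C-M) * m" using d1 d2 ca cD c4 by (simp add: m_def algebra_simps)
        qed
      next
        assume c3: "card C = 3"
        have ex: "\<exists>z\<in>C. fc z = m" and exc: "card (A-B)*m2 + card (B-A)*m1 = m"
        proof -
          have "(card A = 2 \<and> card B = 2 \<and> card (A \<inter> B) = 1) \<or> (card A = 2 \<and> card B = 1 \<and> card (A \<inter> B) = 0)
              \<or> (card A = 1 \<and> card B = 2 \<and> card (A \<inter> B) = 0)"
          proof -
            have "card (A \<inter> B) \<le> card A" "card (A \<inter> B) \<le> card B" using finA finB by (auto intro: card_mono)
            then show ?thesis using cu c3 cA cB by linarith
          qed
          then have "(\<exists>z\<in>C. fc z = m) \<and> card (A-B)*m2 + card (B-A)*m1 = m"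
          proof (elim disjE conjE)
            assume ca: "card A = 2" "card B = 2" "card (A \<inter> B) = 1"
            obtain x1 where x1: "x1 \<in> A" "f1 x1 = m1" using fm1(3)[OF ca(1)] by auto
            obtain y1 where y1: "y1 \<in> B" "f2 y1 = m2" using fm2(3)[OF ca(2)] by auto
            have "\<exists>z\<in>C. fc z = m"
            proof (cases "x1 \<in> B")
              case False
              then show ?thesis using fcA[OF x1(1) False] x1 by (auto simp: C_def m_def)
            next
              case xB: True
              show ?thesis
              proof (cases "y1 \<in> A")
                case False
                then show ?thesis using fcB[OF False y1(1)] y1 by (intro bexI[of _ y1]) (auto simp: C_def m_def)
              next
                case yA: True
                show ?thesis
                proof (cases "x1 = y1")
                  case True
                  then show ?thesis using fcAB[OF x1(1) xB] x1 y1 by (auto simp: C_def m_def)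
                next
                  case False
                  have "{x1,y1} \<subseteq> A \<inter> B" using x1 y1 xB yA by auto
                  then have "card {x1,y1} \<le> card (A \<inter> B)" using finA by (intro card_mono) auto
                  then show ?thesis using False ca by simp
                qed
              qed
            qed
            moreover have "card (A-B)*m2 + card (B-A)*m1 = m" using d1 d2 ca by (simp add: m_def)
            ultimately show ?thesis by blast
          next
            assume ca: "card A = 2" "card B = 1" "card (A \<inter> B) = 0"
            then have dis: "A \<inter> B = {}" using finA by simp
            have m20: "m2 = 0" using fm2(4) ca by simp
            obtain x1 where x1: "x1 \<in> A" "f1 x1 = m1" using fm1(3)[OF ca(1)] by auto
            have "x1 \<notin> B" using dis x1 by auto
            then have "\<exists>z\<in>C. fc z = m" using fcA[OF x1(1)] x1 m20 by (auto simp: C_def m_def)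
            moreover have "card (A-B)*m2 + card (B-A)*m1 = m" using d2 ca m20 by (simp add: m_def)
            ultimately show ?thesis by blast
          next
            assume ca: "card A = 1" "card B = 2" "card (A \<inter> B) = 0"
            then have dis: "A \<inter> B = {}" using finA by simp
            have m10: "m1 = 0" using fm1(4) ca by simp
            obtain y1 where y1: "y1 \<in> B" "f2 y1 = m2" using fm2(3)[OF ca(2)] by auto
            have "y1 \<notin> A" using dis y1 by auto
            then have "\<exists>z\<in>C. fc z = m" using fcB[OF _ y1(1)] y1 m10 by (intro bexI[of _ y1]) (auto simp: C_def m_def)
            moreover have "card (A-B)*m2 + card (B-A)*m1 = m" using d1 ca m10 by (simp add: m_def)
            ultimately show ?thesis by blast
          qed
          then show "\<exists>z\<in>C. fc z = m" "card (A-B)*m2 + card (B-A)*m1 = m" by auto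
        qed
        obtain z where z: "z \<in> C" "fc z = m" using ex by auto
        show ?thesis
          using z exc cD c3 by (intro exI[of _ "{z}"]) auto
      qed
    qed
    then obtain Z where Z: "Z \<subseteq> C" "card Z = card (C-M)" "\<And>z. z\<in>Z \<Longrightarrow> fc z = m"
      and exc: "card (A-B)*m2 + card (B-A)*m1 = card (C-M) * m" by blast
    have allD: "fc e = m" if e: "e \<in> C - M" for e
    proof (rule ccontr)
      assume "fc e \<noteq> m"
      then have gt: "fc e > m" using P1[of e] e by auto
      have "Z \<inter> M = {}"
      proof (rule ccontr)
        assume "Z \<inter> M \<noteq> {}" then obtain x where "x \<in> Z" "x \<in> M" by auto
        then show False using dom[of x e] e Z(3)[of x] gt by auto
      qed
      then have "Z \<subseteq> C - M" using Z(1) by auto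
      then have "Z = C - M" using Z(2) finC by (intro card_subset_eq) auto
      then show False using e Z(3)[of e] gt by auto
    qed
    have "sum fc C = sum fc (C - M) + sum fc M" using sum.subset_diff[OF MC finC] by simp
    moreover have "sum fc (C - M) = card (C - M) * m" using allD by simp
    ultimately have "snorm (M,g) = snorm (C,fc) - card (C-M) * m" using snM by (simp add: snorm_def)
    then have "snorm (M,g) = total t1 + total t2" using P3 exc by simp
    then show ?thesis using cM2 K2 by simp
  qed
  have tcM: "two_counter (M,g)"
    using K finM P1 MC ge unfolding two_counter_def by auto
  have tot: "total (t1 @ t2) = total t1 + total t2" by (rule total_append)
  have v_ii: "\<forall>e\<in>M. g e - fmin (M,g) \<le> freq (t1@t2) e \<and> freq (t1@t2) e \<le> g e"
  proof
    fix e assume e: "e \<in> M"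
    have "m \<le> fmin (M,g)" using K mle by (cases "card M = 2") (auto simp: fmin_def)
    then show "g e - fmin (M,g) \<le> freq (t1@t2) e \<and> freq (t1@t2) e \<le> g e"
      using P1[of e] e MC ge[OF e] by auto
  qed
  have v_iii: "\<forall>e. e \<notin> M \<longrightarrow> freq (t1@t2) e \<le> fmin (M,g)"
  proof (intro allI impI)
    fix e assume e: "e \<notin> M"
    have "m \<le> fmin (M,g)" using K mle by (cases "card M = 2") (auto simp: fmin_def)
    show "freq (t1@t2) e \<le> fmin (M,g)"
    proof (cases "e \<in> C")
      case True
      then show ?thesis using K e P1[of e] by force
    next
      case False
      then show ?thesis using P2[of e] \<open>m \<le> fmin (M,g)\<close> by simp
    qed
  qed
  have v_iv: "fmin (M,g) \<le> total (t1@t2) / 2"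
  proof (cases "card M = 2")
    case True
    then obtain x y where xy: "M = {x,y}" "x \<noteq> y" by (auto simp: card_2_iff)
    have "fmin (M,g) \<le> g x" "fmin (M,g) \<le> g y" using True xy by (auto simp: fmin_def)
    moreover have "snorm (M,g) = g x + g y" using xy by (simp add: snorm_def)
    ultimately show ?thesis using K tot by simp
  next
    case False
    then show ?thesis using total_nonneg[OF p1] total_nonneg[OF p2] tot by (simp add: fmin_def)
  qed
  show ?thesis using tcM v_ii v_iii v_iv K tot unfolding valid_def by simp
qed

theorem theorem3:
  fixes d w :: nat
    and h :: "nat \<Rightarrow> 'a \<Rightarrow> nat"
    and \<sigma>1 \<sigma>2 :: "'a stream"
    and D1 D2 G :: "nat \<Rightarrow> nat \<Rightarrow> 'a summary"
  assumes "d \<ge> 1" and "w \<ge> 1"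
    and "\<And>i e. i \<in> {1..d} \<Longrightarrow> h i e \<in> {1..w}"
    and "pos_weights \<sigma>1" and "pos_weights \<sigma>2"
    and "\<And>i j. i \<in> {1..d} \<Longrightarrow> j \<in> {1..w} \<Longrightarrow>
           two_counter (D1 i j) \<and> valid (D1 i j) (cell_stream h \<sigma>1 i j)"
    and "\<And>i j. i \<in> {1..d} \<Longrightarrow> j \<in> {1..w} \<Longrightarrow>
           two_counter (D2 i j) \<and> valid (D2 i j) (cell_stream h \<sigma>2 i j)"
    and "\<And>i j. i \<in> {1..d} \<Longrightarrow> j \<in> {1..w} \<Longrightarrow> is_merge (D1 i j) (D2 i j) (G i j)"
  shows "\<forall>i \<in> {1..d}. \<forall>j \<in> {1..w}.
           two_counter (G i j) \<and> valid (G i j) (cell_stream h (\<sigma>1 @ \<sigma>2) i j) \<and>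
           snorm (G i j) = total (cell_stream h (\<sigma>1 @ \<sigma>2) i j) \<and>
           total (cell_stream h (\<sigma>1 @ \<sigma>2) i j) =
             total (cell_stream h \<sigma>1 i j) + total (cell_stream h \<sigma>2 i j)"
proof (intro ballI)
  fix i j assume i: "i \<in> {1..d}" and j: "j \<in> {1..w}"
  obtain A f1 where D1: "D1 i j = (A,f1)" by (cases "D1 i j")
  obtain B f2 where D2: "D2 i j = (B,f2)" by (cases "D2 i j")
  obtain M g where GG: "G i j = (M,g)" by (cases "G i j")
  have pw: "pos_weights (cell_stream h \<sigma>1 i j)" "pos_weights (cell_stream h \<sigma>2 i j)"
    using assms(4,5) by (auto simp: pos_weights_def cell_stream_def)
  have ap: "cell_stream h (\<sigma>1 @ \<sigma>2) i j = cell_stream h \<sigma>1 i j @ cell_stream h \<sigma>2 i j"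
    by (simp add: cell_stream_def)
  have r: "two_counter (M,g) \<and> valid (M,g) (cell_stream h \<sigma>1 i j @ cell_stream h \<sigma>2 i j)"
    using cell[of A f1 "cell_stream h \<sigma>1 i j" B f2 "cell_stream h \<sigma>2 i j" M g]
      assms(6)[OF i j] assms(7)[OF i j] assms(8)[OF i j] pw D1 D2 GG by simp
  then show "two_counter (G i j) \<and> valid (G i j) (cell_stream h (\<sigma>1 @ \<sigma>2) i j) \<and>
           snorm (G i j) = total (cell_stream h (\<sigma>1 @ \<sigma>2) i j) \<and>
           total (cell_stream h (\<sigma>1 @ \<sigma>2) i j) =
             total (cell_stream h \<sigma>1 i j) + total (cell_stream h \<sigma>2 i j)"
    using GG ap total_append by (simp add: valid_def)
qed

end
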